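(* Let $C_n(a,b)$ be a connected $2$-regular circulant digraph, let $l\ge1$, $0\le k\le l$ with $la+k(b-a)=\omega n$ for an integer $\omega$, and let $Q$ be the set of positive divisors of $\gcd(l,k)$ that are coprime with $\omega$. Then $$|\mathcal{P}_{l,k}(C_n(a,b))|=\frac{n}{l}\sum_{q\in Q}\ \sum_{m\mid \gcd(l,k)/q}\mu(m)\binom{l/(qm)}{k/(qm)},$$ where $\mu$ is the Möbius function.
   Context: Let $n\ge 2$ and $0<a<b<n$ be integers; $C_n(a,b)$ is connected iff $\gcd(n,a,b)=1$. $C_n(a,b)$ has vertex set $\mathbb{Z}_n$ and directed bonds $(v,v+a)$, $(v,v+b)$ (addition mod $n$), with step sizes $a$, $b$. A path of length $l$ is a sequence of bonds $(e_1,\dots,e_l)$ with the terminus of $e_j$ equal to the origin of $e_{j+1}$; its $b$-count is the number of bonds of step size $b$; a circuit is a path whose last terminus equals its first origin. A periodic orbit is an equivalence class of circuits under cyclic rotation $(e_1,\dots,e_l)\mapsto(e_2,\dots,e_l,e_1)$; it is primitive if it is not $[c_0^r]$ for a circuit $c_0$ and $r>1$ ($c_0^r$ = concatenation of $r$ copies). $\mathcal{P}_{l,k}(C_n(a,b))$ is the set of primitive periodic orbits of length $l$ and $b$-count $k$. *)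

theory Defs
  imports Main "HOL-Computational_Algebra.Computational_Algebra"
begin

definition moebius_mu :: "nat \<Rightarrow> int" where
  "moebius_mu m = (if squarefree m then (-1) ^ card (prime_factors m) else 0)"

(* Vertices of C_n(a,b): {0..<n} representing Z_n.  A bond is a pair (origin, terminus). *)
type_synonym bond = "nat \<times> nat"

definition bonds :: "nat \<Rightarrow> nat \<Rightarrow> nat \<Rightarrow> bond set" where
  "bonds n a b = {(v, (v + a) mod n) | v. v < n} \<union> {(v, (v + b) mod n) | v. v < n}"

definition is_b_bond :: "nat \<Rightarrow> nat \<Rightarrow> bond \<Rightarrow> bool" where
  "is_b_bond n b e \<longleftrightarrow> snd e = (fst e + b) mod n"

definition b_count :: "nat \<Rightarrow> nat \<Rightarrow> bond list \<Rightarrow> nat" where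
  "b_count n b c = length (filter (is_b_bond n b) c)"

definition is_path :: "nat \<Rightarrow> nat \<Rightarrow> nat \<Rightarrow> bond list \<Rightarrow> bool" where
  "is_path n a b c \<longleftrightarrow> c \<noteq> [] \<and> set c \<subseteq> bonds n a b \<and>
     (\<forall>j. Suc j < length c \<longrightarrow> snd (c ! j) = fst (c ! Suc j))"

definition is_circuit :: "nat \<Rightarrow> nat \<Rightarrow> nat \<Rightarrow> bond list \<Rightarrow> bool" where
  "is_circuit n a b c \<longleftrightarrow> is_path n a b c \<and> snd (last c) = fst (hd c)"

(* periodic orbit of a circuit: its class under cyclic rotation *)
definition orbit :: "bond list \<Rightarrow> bond list set" where
  "orbit c = {rotate i c | i. True}"

definition primitive_orbit :: "nat \<Rightarrow> nat \<Rightarrow> nat \<Rightarrow> bond list set \<Rightarrow> bool" where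
  "primitive_orbit n a b Orb \<longleftrightarrow>
     \<not> (\<exists>c0 r. r > 1 \<and> is_circuit n a b c0 \<and> Orb = orbit (concat (replicate r c0)))"

definition prim_orbits :: "nat \<Rightarrow> nat \<Rightarrow> nat \<Rightarrow> nat \<Rightarrow> nat \<Rightarrow> bond list set set" where
  "prim_orbits n a b l k = {Orb. \<exists>c. is_circuit n a b c \<and> length c = l \<and> b_count n b c = k
        \<and> Orb = orbit c \<and> primitive_orbit n a b Orb}"

end

theory Submission imports Defs begin

lemma sum_pow_alt_insert:
  assumes "finite A" "a \<notin> A"
  shows "(\<Sum>S\<in>Pow (insert a A). (-1::real) ^ card S) = 0"
proof -
  have eq: "Pow (insert a A) = Pow A \<union> insert a ` Pow A" by (rule Pow_insert)
  have disj: "Pow A \<inter> insert a ` Pow A = {}" using assms by auto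
  have inj: "inj_on (insert a) (Pow A)" using assms by (auto simp: inj_on_def)
  have "(\<Sum>S\<in>Pow (insert a A). (-1::real) ^ card S) =
     (\<Sum>S\<in>Pow A. (-1::real) ^ card S) + (\<Sum>S\<in>insert a ` Pow A. (-1::real) ^ card S)"
    unfolding eq using assms disj by (intro sum.union_disjoint) auto
  also have "(\<Sum>S\<in>insert a ` Pow A. (-1::real) ^ card S) = (\<Sum>S\<in>Pow A. (-1::real) ^ card (insert a S))"
    using inj by (simp add: sum.reindex)
  also have "\<dots> = (\<Sum>S\<in>Pow A. - ((-1::real) ^ card S))"
  proof (rule sum.cong)
    fix S assume "S \<in> Pow A"
    then have "finite S" "a \<notin> S" using assms finite_subset by auto
    then show "(-1::real) ^ card (insert a S) = - ((-1::real) ^ card S)" by simp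
  qed simp
  finally show ?thesis by (simp add: sum_negf)
qed

lemma sum_pow_alt:
  assumes "finite A" "A \<noteq> {}"
  shows "(\<Sum>S\<in>Pow A. (-1::real) ^ card S) = 0"
proof -
  obtain a where a: "a \<in> A" using assms by auto
  then have "A = insert a (A - {a})" by auto
  then show ?thesis using sum_pow_alt_insert[of "A - {a}" a] assms by (metis finite_Diff Diff_iff singletonI)
qed

lemma prod_primes_dvd:
  fixes N :: nat
  assumes "N > 0" "S \<subseteq> prime_factors N"
  shows "\<Prod>S dvd N"
proof -
  have fin: "finite (prime_factors N)" by simp
  have "\<Prod>S dvd (\<Prod>p\<in>S. p ^ multiplicity p N)"
  proof (rule prod_dvd_prod)
    fix p assume "p \<in> S"
    then have "p \<in> prime_factors N" using assms by auto
    then have "multiplicity p N \<ge> 1" using assms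
      by (simp add: prime_factors_multiplicity)
    then show "p dvd p ^ multiplicity p N" by (simp add: dvd_power)
  qed
  also have "\<dots> dvd (\<Prod>p\<in>prime_factors N. p ^ multiplicity p N)"
    using assms fin by (intro prod_dvd_prod_subset) auto
  also have "\<dots> = N" using prod_prime_factors[of N] assms by simp
  finally show ?thesis .
qed

lemma prime_factors_Prod:
  fixes S :: "nat set"
  assumes "finite S" "\<forall>p\<in>S. prime p"
  shows "prime_factors (\<Prod>S) = S"
proof -
  have "0 \<notin> id ` S" using assms by auto
  then have "prime_factors (prod id S) = \<Union>((prime_factors \<circ> id) ` S)"
    using prime_factors_prod[of S id] assms by simp
  also have "\<dots> = S" using assms by (auto simp: prime_factorization_prime)
  finally show ?thesis by simp
qed

lemma squarefree_Prod:
  fixes S :: "nat set"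
  assumes "\<forall>p\<in>S. prime p"
  shows "squarefree (\<Prod>S)"
  using assms
  by (intro squarefree_prod_coprime) (auto intro: primes_coprime squarefree_prime)

lemma squarefree_eq_Prod:
  fixes m :: nat
  assumes "squarefree m"
  shows "\<Prod>(prime_factors m) = m"
proof -
  have m0: "m \<noteq> 0" using assms by (cases "m = 0") auto
  have "(\<Prod>p\<in>prime_factors m. p ^ multiplicity p m) = m" using prod_prime_factors[OF m0] by simp
  moreover have "(\<Prod>p\<in>prime_factors m. p ^ multiplicity p m) = (\<Prod>p\<in>prime_factors m. p)"
    using assms m0 by (intro prod.cong) (auto simp: squarefree_factorial_semiring')
  ultimately show ?thesis by simp
qed

lemma moebius_sum:
  fixes N :: nat
  assumes "N > 0"
  shows "(\<Sum>m\<in>{m. m dvd N}. real_of_int (moebius_mu m)) = (if N = 1 then 1 else 0)"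
proof -
  have fin: "finite {m. m dvd N}" using assms by simp
  have "(\<Sum>m\<in>{m. m dvd N}. real_of_int (moebius_mu m)) =
        (\<Sum>m\<in>{m. m dvd N \<and> squarefree m}. real_of_int (moebius_mu m))"
    using fin by (intro sum.mono_neutral_right) (auto simp: moebius_mu_def)
  also have "\<dots> = (\<Sum>m\<in>{m. m dvd N \<and> squarefree m}. (-1::real) ^ card (prime_factors m))"
    by (intro sum.cong) (auto simp: moebius_mu_def)
  also have "\<dots> = (\<Sum>S\<in>Pow (prime_factors N). (-1::real) ^ card S)"
  proof (rule sum.reindex_bij_witness[where i = "\<lambda>S. \<Prod>S" and j = prime_factors])
    fix S assume S: "S \<in> Pow (prime_factors N)"
    then have fS: "finite S" by (meson PowD finite_set_mset finite_subset)
    have pS: "\<forall>p\<in>S. prime p" using S by auto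
    show "prime_factors (\<Prod>S) = S" using prime_factors_Prod[OF fS pS] .
    show "\<Prod>S \<in> {m. m dvd N \<and> squarefree m}"
      using prod_primes_dvd[of N S] S assms squarefree_Prod[OF pS] by auto
  next
    fix m assume m: "m \<in> {m. m dvd N \<and> squarefree m}"
    then show "\<Prod>(prime_factors m) = m" using squarefree_eq_Prod by auto
    have "m \<noteq> 0" using m assms by auto
    then show "prime_factors m \<in> Pow (prime_factors N)" using m assms
      by (auto simp: prime_factors_dvd intro: dvd_trans)
  qed simp
  also have "\<dots> = (if N = 1 then 1 else 0)"
  proof (cases "N = 1")
    case True then show ?thesis by simp
  next
    case False
    obtain p where "prime p" "p dvd N" using prime_factor_nat[OF False] by blast
    then have "prime_factors N \<noteq> {}" using assms by (auto simp: prime_factors_dvd)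
    then show ?thesis using sum_pow_alt[of "prime_factors N"] False by simp
  qed
  finally show ?thesis .
qed

lemma moebius_inversion:
  fixes g q :: nat and P :: "nat \<Rightarrow> real"
  assumes "g > 0" "q > 0" "q dvd g"
  shows "(\<Sum>m\<in>{m. m dvd (g div q)}. real_of_int (moebius_mu m) *
            (\<Sum>j\<in>{j. j dvd g \<and> q * m dvd j}. P j)) = P q"
proof -
  have gq: "g div q > 0" using assms by (auto elim!: dvdE)
  have finA: "finite {m. m dvd (g div q)}" using gq by simp
  have finB: "finite {j. j dvd g}" using assms by simp
  have "(\<Sum>m\<in>{m. m dvd (g div q)}. real_of_int (moebius_mu m) *
            (\<Sum>j\<in>{j. j dvd g \<and> q * m dvd j}. P j)) =
        (\<Sum>m\<in>{m. m dvd (g div q)}. \<Sum>j\<in>{j \<in> {j. j dvd g}. q * m dvd j}. real_of_int (moebius_mu m) * P j)"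
    by (simp add: sum_distrib_left)
  also have "\<dots> = (\<Sum>j\<in>{j. j dvd g}. \<Sum>m\<in>{m \<in> {m. m dvd (g div q)}. q * m dvd j}. real_of_int (moebius_mu m) * P j)"
    using finA finB by (rule sum.swap_restrict)
  also have "\<dots> = (\<Sum>j\<in>{j. j dvd g}. (if j = q then P j else 0))"
  proof (rule sum.cong)
    fix j assume j: "j \<in> {j. j dvd g}"
    show "(\<Sum>m\<in>{m \<in> {m. m dvd (g div q)}. q * m dvd j}. real_of_int (moebius_mu m) * P j) =
          (if j = q then P j else 0)"
    proof (cases "q dvd j")
      case True
      then obtain s where s: "j = q * s" by auto
      have s0: "s > 0" using s j assms by (auto intro: gr0I)
      have "s dvd g div q" using j s assms by auto
      then have set: "{m \<in> {m. m dvd (g div q)}. q * m dvd j} = {m. m dvd s}"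
        using s assms by (auto intro: dvd_trans)
      have "(\<Sum>m\<in>{m \<in> {m. m dvd (g div q)}. q * m dvd j}. real_of_int (moebius_mu m) * P j)
          = (\<Sum>m\<in>{m. m dvd s}. real_of_int (moebius_mu m)) * P j"
        unfolding set by (simp add: sum_distrib_right)
      also have "\<dots> = (if j = q then P j else 0)"
        using moebius_sum[OF s0] s assms by auto
      finally show ?thesis .
    next
      case False
      then have E: "{m \<in> {m. m dvd (g div q)}. q * m dvd j} = {}"
        by (auto intro: dvd_mult_left)
      show ?thesis using False by (simp only: E sum.empty) auto
    qed
  qed simp
  also have "\<dots> = P q" using assms finB by (simp add: sum.delta)
  finally show ?thesis .
qed


definition pw :: "nat \<Rightarrow> 'a list \<Rightarrow> 'a list" where
  "pw r u = concat (replicate r u)"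

definition cnt :: "bool list \<Rightarrow> nat" where
  "cnt w = length (filter id w)"

definition WW :: "nat \<Rightarrow> nat \<Rightarrow> bool list set" where
  "WW L K = {w. length w = L \<and> cnt w = K}"

definition per :: "'a list \<Rightarrow> nat" where
  "per xs = (LEAST p. 0 < p \<and> rotate p xs = xs)"

definition ex :: "'a list \<Rightarrow> nat" where
  "ex xs = length xs div per xs"

lemma rot_mult: "rotate p xs = xs \<Longrightarrow> rotate (p * x) xs = xs"
proof (induction x)
  case 0 then show ?case by simp
next
  case (Suc x)
  have "rotate (p * Suc x) xs = rotate p (rotate (p * x) xs)" by (simp add: rotate_rotate)
  then show ?case using Suc by simp
qed

lemma rot_gcd:
  assumes "p \<noteq> 0" "rotate p xs = xs" "rotate q xs = xs"
  shows "rotate (gcd p q) xs = xs"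
proof -
  obtain x y where e: "p * x = q * y + gcd p q" using bezout_nat[OF assms(1)] by blast
  have "xs = rotate (p * x) xs" using rot_mult[OF assms(2)] by simp
  also have "\<dots> = rotate (gcd p q) (rotate (q * y) xs)" by (simp add: e rotate_rotate add.commute)
  also have "\<dots> = rotate (gcd p q) xs" using rot_mult[OF assms(3)] by simp
  finally show ?thesis by simp
qed

lemma rot_len: "rotate (length xs) xs = xs" by simp

lemma per_props:
  assumes "xs \<noteq> []"
  shows "0 < per xs" "rotate (per xs) xs = xs" "per xs \<le> length xs"
proof -
  have w: "0 < length xs \<and> rotate (length xs) xs = xs" using assms by simp
  have "0 < per xs \<and> rotate (per xs) xs = xs" unfolding per_def by (rule LeastI[of _ "length xs"], rule w)
  then show "0 < per xs" "rotate (per xs) xs = xs" by auto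
  show "per xs \<le> length xs" unfolding per_def by (rule Least_le, rule w)
qed

lemma per_dvd_iff:
  assumes "xs \<noteq> []"
  shows "rotate p xs = xs \<longleftrightarrow> per xs dvd p"
proof
  assume r: "rotate p xs = xs"
  let ?g = "gcd (per xs) p"
  have g1: "rotate ?g xs = xs" by (rule rot_gcd) (use per_props[OF assms] r in auto)
  have g0: "0 < ?g" using per_props[OF assms] by simp
  have "per xs \<le> ?g" using g0 g1 unfolding per_def by (intro Least_le) simp
  moreover have "?g \<le> per xs" by (rule gcd_le1_nat) (use per_props[OF assms] in simp)
  ultimately have "per xs = ?g" by (rule antisym)
  then show "per xs dvd p" by (metis gcd_dvd2)
next
  assume "per xs dvd p"
  then obtain c where "p = per xs * c" by auto
  then show "rotate p xs = xs" using rot_mult[OF per_props(2)[OF assms]] by simp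
qed

lemma per_dvd_len: "xs \<noteq> [] \<Longrightarrow> per xs dvd length xs"
  using per_dvd_iff[of xs "length xs"] by simp

lemma ex_dvd_iff:
  assumes "xs \<noteq> []" "t dvd length xs"
  shows "rotate (length xs div t) xs = xs \<longleftrightarrow> t dvd ex xs"
proof -
  obtain e where e: "length xs = per xs * e" using per_dvd_len[OF assms(1)] by auto
  obtain s where s: "length xs = t * s" using assms(2) by auto
  have p0: "per xs > 0" using per_props[OF assms(1)] by simp
  have L0: "length xs > 0" using assms by simp
  have t0: "t > 0" using s L0 by (auto intro: gr0I)
  have ex: "ex xs = e" using e p0 by (simp add: ex_def)
  have ld: "length xs div t = s" using s t0 by simp
  have "per xs dvd s \<longleftrightarrow> t dvd e"
  proof
    assume "per xs dvd s" then obtain c where "s = per xs * c" by auto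
    then have "per xs * e = per xs * (t * c)" using e s by (metis mult.left_commute)
    then have "e = t * c" using p0 by (metis mult_left_cancel not_gr0)
    then show "t dvd e" by simp
  next
    assume "t dvd e" then obtain c where "e = t * c" by auto
    then have "t * s = t * (per xs * c)" using e s by (metis mult.left_commute)
    then have "s = per xs * c" using t0 by simp
    then show "per xs dvd s" by simp
  qed
  then show ?thesis using per_dvd_iff[OF assms(1)] ld ex by simp
qed

lemma length_pw[simp]: "length (pw r u) = r * length u"
  by (induction r) (auto simp: pw_def)

lemma pw_Suc: "pw (Suc r) u = u @ pw r u" by (simp add: pw_def)
lemma pw_0[simp]: "pw 0 u = []" by (simp add: pw_def)
lemma pw_Nil[simp]: "pw r [] = []" by (induction r) (simp_all add: pw_def)

lemma pw_Suc2: "pw (Suc r) u = pw r u @ u"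
  by (induction r) (auto simp: pw_Suc)

lemma filter_pw: "length (filter P (pw r u)) = r * length (filter P u)"
  by (induction r) (auto simp: pw_Suc)

lemma map_pw: "map f (pw r u) = pw r (map f u)"
  by (simp add: pw_def map_concat)

lemma take_pw: "0 < r \<Longrightarrow> take (length u) (pw r u) = u"
  by (cases r) (auto simp: pw_Suc)

lemma rot_pw: "rotate (length u) (pw r u) = pw r u"
proof (cases r)
  case 0 then show ?thesis by simp
next
  case (Suc r')
  have "rotate (length u) (u @ pw r' u) = pw r' u @ u" by (rule rotate_append)
  then show ?thesis using Suc by (simp add: pw_Suc pw_Suc2[symmetric])
qed

lemma nth_pw: "i < r * length u \<Longrightarrow> pw r u ! i = u ! (i mod length u)"
proof (induction r arbitrary: i)
  case 0 then show ?case by simp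
next
  case (Suc r)
  show ?case
  proof (cases "i < length u")
    case True then show ?thesis by (simp add: pw_Suc nth_append)
  next
    case False
    then have "pw (Suc r) u ! i = pw r u ! (i - length u)" by (simp add: pw_Suc nth_append)
    also have "\<dots> = u ! ((i - length u) mod length u)"
    proof -
      have "i - length u < r * length u" using Suc.prems False by simp
      then show ?thesis by (rule Suc.IH)
    qed
    also have "(i - length u) mod length u = i mod length u" using False by (simp add: le_mod_geq)
    finally show ?thesis .
  qed
qed

lemma periodic:
  assumes "rotate d xs = xs" "0 < d" "d dvd length xs" "xs \<noteq> []"
  shows "xs = pw (length xs div d) (take d xs)"
proof -
  have step: "xs ! (i + d) = xs ! i" if "i + d < length xs" for i
  proof -
    have "xs ! i = rotate d xs ! i" using assms by simp
    also have "\<dots> = xs ! ((i + d) mod length xs)" using that nth_rotate[of i xs d] by (simp add: add.commute)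
    finally have A: "xs ! i = xs ! ((i + d) mod length xs)" .
    have B: "(i + d) mod length xs = i + d" using that by simp
    show ?thesis using A B by (simp only:)
  qed
  have per: "xs ! i = xs ! (i mod d)" if "i < length xs" for i
    using that
  proof (induction i rule: less_induct)
    case (less i)
    show ?case
    proof (cases "i < d")
      case True then show ?thesis by simp
    next
      case False
      then have "xs ! i = xs ! (i - d)" using step[of "i - d"] less.prems by simp
      also have "\<dots> = xs ! ((i - d) mod d)" using less False assms(2) by (intro less.IH) auto
      also have "(i - d) mod d = i mod d" using False by (simp add: le_mod_geq)
      finally show ?thesis .
    qed
  qed
  have "d \<le> length xs" using assms by (intro dvd_imp_le) auto
  then have ld: "length (take d xs) = d" by simp
  obtain t where t: "length xs = d * t" using assms by auto
  show ?thesis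
  proof (rule nth_equalityI)
    show "length xs = length (pw (length xs div d) (take d xs))" using ld t assms by simp
    fix i assume i: "i < length xs"
    have "pw (length xs div d) (take d xs) ! i = take d xs ! (i mod d)"
      using nth_pw[of i "length xs div d" "take d xs"] ld t i assms by (simp add: mult.commute)
    also have "\<dots> = xs ! (i mod d)" using assms(2) by simp
    finally show "xs ! i = pw (length xs div d) (take d xs) ! i" using per[OF i] by simp
  qed
qed

lemma finite_WW: "finite (WW L K)"
proof -
  have "WW L K \<subseteq> {xs. set xs \<subseteq> UNIV \<and> length xs = L}" by (auto simp: WW_def)
  moreover have "finite {xs::bool list. set xs \<subseteq> UNIV \<and> length xs = L}"
    by (rule finite_lists_length_eq) simp
  ultimately show ?thesis by (rule finite_subset)
qed

lemma cnt_card: "cnt w = card {i. i < length w \<and> w ! i}"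
  by (simp add: cnt_def length_filter_conv_card)

lemma card_WW: "card (WW L K) = L choose K"
proof -
  let ?f = "\<lambda>w::bool list. {i. i < length w \<and> w ! i}"
  let ?T = "{S \<in> Pow {0..<L}. card S = K}"
  have inj: "inj_on ?f (WW L K)"
  proof (rule inj_onI)
    fix x y assume x: "x \<in> WW L K" and y: "y \<in> WW L K" and e: "?f x = ?f y"
    show "x = y"
    proof (rule nth_equalityI)
      show "length x = length y" using x y by (simp add: WW_def)
      fix i assume i: "i < length x"
      have "(i \<in> ?f x) = (i \<in> ?f y)" using e by simp
      then have "(i < length x \<and> x ! i) = (i < length y \<and> y ! i)" by (simp only: mem_Collect_eq)
      moreover have "i < length y" using i \<open>length x = length y\<close> by simp
      ultimately show "x ! i = y ! i" using i by blast
    qed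
  qed
  have img: "?f ` WW L K = ?T"
  proof
    show "?f ` WW L K \<subseteq> ?T"
    proof
      fix S assume "S \<in> ?f ` WW L K"
      then obtain w where w: "w \<in> WW L K" "S = ?f w" by blast
      have "length w = L" "cnt w = K" using w(1) by (auto simp: WW_def)
      then have "card S = K" using cnt_card[of w] w(2) by simp
      moreover have "S \<subseteq> {0..<L}" using w by (auto simp: WW_def)
      ultimately show "S \<in> ?T" by simp
    qed
    show "?T \<subseteq> ?f ` WW L K"
    proof
      fix S assume S: "S \<in> ?T"
      let ?w = "map (\<lambda>i. i \<in> S) [0..<L]"
      have SL: "S \<subseteq> {0..<L}" using S by simp
      have fS: "?f ?w = S"
      proof (rule set_eqI)
        fix i
        have "i \<in> S \<Longrightarrow> i < L" using SL by auto
        then show "(i \<in> ?f ?w) = (i \<in> S)" by auto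
      qed
      have "cnt ?w = card (?f ?w)" by (rule cnt_card)
      also have "\<dots> = card S" by (subst fS) (rule refl)
      also have "\<dots> = K" using S by simp
      finally have "cnt ?w = K" .
      moreover have "length ?w = L" by simp
      ultimately have wW: "?w \<in> WW L K" by (simp only: WW_def mem_Collect_eq)
      show "S \<in> ?f ` WW L K" using fS[symmetric] wW by (rule image_eqI)
    qed
  qed
  have "card (WW L K) = card ?T" using card_image[OF inj] img by simp
  then show ?thesis by (simp add: binomial_def)
qed

lemma cnt_pw: "cnt (pw r u) = r * cnt u" by (simp add: cnt_def filter_pw)

lemma card_sym:
  assumes "0 < q" "q dvd L" "q dvd K"
  shows "card {w \<in> WW L K. rotate (L div q) w = w} = (L div q) choose (K div q)"
proof -
  have im: "pw q ` WW (L div q) (K div q) = {w \<in> WW L K. rotate (L div q) w = w}"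
  proof
    show "pw q ` WW (L div q) (K div q) \<subseteq> {w \<in> WW L K. rotate (L div q) w = w}"
    proof
      fix w assume "w \<in> pw q ` WW (L div q) (K div q)"
      then obtain u where u: "u \<in> WW (L div q) (K div q)" "w = pw q u" by auto
      have "length w = L" "cnt w = K" using u assms by (auto simp: WW_def cnt_pw)
      moreover have "rotate (L div q) w = w" using u rot_pw[of u q] by (simp add: WW_def)
      ultimately show "w \<in> {w \<in> WW L K. rotate (L div q) w = w}" by (simp add: WW_def)
    qed
  next
    show "{w \<in> WW L K. rotate (L div q) w = w} \<subseteq> pw q ` WW (L div q) (K div q)"
    proof
      fix w assume w: "w \<in> {w \<in> WW L K. rotate (L div q) w = w}"
      show "w \<in> pw q ` WW (L div q) (K div q)"
      proof (cases "L = 0")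
        case True
        have "w = []" using w True by (simp add: WW_def)
        moreover have "K = 0" using w \<open>w = []\<close> by (simp add: WW_def cnt_def)
        ultimately show ?thesis using True by (auto simp: WW_def cnt_def image_iff intro!: exI[of _ "[]"])
      next
        case False
        obtain s where s: "L = q * s" using assms(2) by (rule dvdE)
        have s0: "0 < s" using s False by (cases s) auto
        have Ldq: "L div q = s" using s assms(1) by simp
        have wL: "length w = L" and wr: "rotate (L div q) w = w" and wK: "cnt w = K"
          using w by (simp_all add: WW_def)
        have wne: "w \<noteq> []" using wL False by auto
        have wr': "rotate s w = w" using wr Ldq by simp
        have sd: "s dvd length w" using wL s by simp
        have e0: "w = pw (length w div s) (take s w)" by (rule periodic[OF wr' s0 sd wne])
        have lw: "length w div s = q" using wL s s0 by simp
        have e1: "w = pw q (take s w)" using e0 lw by metis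
        have e: "w = pw q (take (L div q) w)" using e1 Ldq by metis
        have "cnt w = q * cnt (take (L div q) w)" by (subst e) (simp add: cnt_pw)
        moreover have "cnt w = K" using w by (simp add: WW_def)
        ultimately have "K = q * cnt (take (L div q) w)" by simp
        then have "cnt (take (L div q) w) = K div q" using assms by simp
        then have "take (L div q) w \<in> WW (L div q) (K div q)" using w by (simp add: WW_def)
        then show ?thesis using e by blast
      qed
    qed
  qed
  have inj: "inj_on (pw q) (WW (L div q) (K div q))"
  proof (rule inj_on_inverseI[where g = "take (L div q)"])
    fix u assume "u \<in> WW (L div q) (K div q)"
    then have "length u = L div q" by (simp add: WW_def)
    then show "take (L div q) (pw q u) = u" using take_pw[of q u] assms by simp
  qed
  have "card {w \<in> WW L K. rotate (L div q) w = w} = card (WW (L div q) (K div q))"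
    using card_image[OF inj] im by simp
  then show ?thesis by (simp add: card_WW)
qed

lemma ex_props:
  assumes "w \<in> WW L K" "0 < L"
  shows "0 < ex w" "ex w dvd L" "ex w dvd K" "w = pw (ex w) (take (per w) w)"
proof -
  have ne: "w \<noteq> []" using assms by (auto simp: WW_def)
  obtain e where e: "length w = per w * e" using per_dvd_len[OF ne] by auto
  have p0: "0 < per w" using per_props[OF ne] by simp
  have exe: "ex w = e" unfolding ex_def e using p0 by (metis nonzero_mult_div_cancel_left neq0_conv)
  show "0 < ex w"
  proof (rule ccontr)
    assume "\<not> 0 < ex w" then have "e = 0" using exe by simp
    then show False using e ne by simp
  qed
  have "L = per w * e" using e assms by (simp add: WW_def)
  then show "ex w dvd L" using exe by simp
  show eq: "w = pw (ex w) (take (per w) w)"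
    unfolding ex_def by (rule periodic) (use per_props[OF ne] per_dvd_len[OF ne] ne in auto)
  have "cnt w = ex w * cnt (take (per w) w)" by (subst eq) (simp add: cnt_pw)
  moreover have "cnt w = K" using assms by (simp add: WW_def)
  ultimately show "ex w dvd K" by (metis dvd_triv_left)
qed

lemma card_dvd_ex:
  assumes "0 < L" "0 < d" "d dvd gcd L K"
  shows "card {w \<in> WW L K. rotate (L div d) w = w} =
         (\<Sum>j\<in>{j. j dvd gcd L K \<and> d dvd j}. card {w \<in> WW L K. ex w = j})"
proof -
  have g0: "0 < gcd L K" using assms by simp
  have "{w \<in> WW L K. rotate (L div d) w = w} = {w \<in> WW L K. d dvd ex w}"
  proof (intro Collect_cong conj_cong refl)
    fix w assume "w \<in> WW L K"
    then show "rotate (L div d) w = w \<longleftrightarrow> d dvd ex w"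
      using ex_dvd_iff[of w d] assms by (auto simp: WW_def)
  qed
  also have "\<dots> = (\<Union>j\<in>{j. j dvd gcd L K \<and> d dvd j}. {w \<in> WW L K. ex w = j})"
    using ex_props assms by auto
  finally have eq: "{w \<in> WW L K. rotate (L div d) w = w} =
      (\<Union>j\<in>{j. j dvd gcd L K \<and> d dvd j}. {w \<in> WW L K. ex w = j})" .
  have fin: "finite {j. j dvd gcd L K \<and> d dvd j}"
    by (rule finite_subset[of _ "{j. j dvd gcd L K}"]) (use g0 in auto)
  show ?thesis unfolding eq
    by (rule card_UN_disjoint) (use fin finite_WW in auto)
qed

lemma word_count:
  fixes L K :: nat and \<omega> :: int
  assumes "0 < L"
  shows "(\<Sum>q\<in>{q. 0 < q \<and> q dvd gcd L K \<and> coprime (int q) \<omega>}.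
         \<Sum>m\<in>{m. m dvd (gcd L K div q)}.
           real_of_int (moebius_mu m) * real ((L div (q * m)) choose (K div (q * m))))
       = real (card {w \<in> WW L K. coprime (int (ex w)) \<omega>})"
proof -
  define g where "g = gcd L K"
  have g0: "0 < g" using assms by (simp add: g_def)
  define Q where "Q = {q. 0 < q \<and> q dvd g \<and> coprime (int q) \<omega>}"
  define P where "P j = real (card {w \<in> WW L K. ex w = j})" for j
  have "Q \<subseteq> {q. q dvd g}" by (auto simp: Q_def)
  moreover have "finite {q. q dvd g}" using g0 by simp
  ultimately have finQ: "finite Q" by (rule finite_subset)
  have "(\<Sum>q\<in>Q. \<Sum>m\<in>{m. m dvd (g div q)}.
           real_of_int (moebius_mu m) * real ((L div (q * m)) choose (K div (q * m)))) =
        (\<Sum>q\<in>Q. P q)"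
  proof (rule sum.cong[OF refl])
    fix q assume q: "q \<in> Q"
    have "(\<Sum>m\<in>{m. m dvd (g div q)}.
           real_of_int (moebius_mu m) * real ((L div (q * m)) choose (K div (q * m)))) =
          (\<Sum>m\<in>{m. m dvd (g div q)}.
           real_of_int (moebius_mu m) * (\<Sum>j\<in>{j. j dvd g \<and> q * m dvd j}. P j))"
    proof (rule sum.cong[OF refl])
      fix m assume m: "m \<in> {m. m dvd (g div q)}"
      have qm: "q * m dvd g" using m q by (auto simp: Q_def elim!: dvdE)
      have qm0: "0 < q * m" using qm g0 by (auto intro: gr0I)
      have "(L div (q * m)) choose (K div (q * m)) = card {w \<in> WW L K. rotate (L div (q * m)) w = w}"
        using card_sym[OF qm0] qm by (simp add: g_def)
      also have "\<dots> = (\<Sum>j\<in>{j. j dvd g \<and> q * m dvd j}. card {w \<in> WW L K. ex w = j})"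
        using card_dvd_ex[OF assms qm0] qm by (simp add: g_def)
      finally show "real_of_int (moebius_mu m) * real ((L div (q * m)) choose (K div (q * m))) =
           real_of_int (moebius_mu m) * (\<Sum>j\<in>{j. j dvd g \<and> q * m dvd j}. P j)"
        by (simp add: P_def)
    qed
    also have "\<dots> = P q" using q g0 by (intro moebius_inversion) (auto simp: Q_def)
    finally show "(\<Sum>m\<in>{m. m dvd (g div q)}.
           real_of_int (moebius_mu m) * real ((L div (q * m)) choose (K div (q * m)))) = P q" .
  qed
  also have "(\<Sum>q\<in>Q. P q) = real (\<Sum>q\<in>Q. card {w \<in> WW L K. ex w = q})" by (simp add: P_def)
  also have "(\<Sum>q\<in>Q. card {w \<in> WW L K. ex w = q}) = card (\<Union>q\<in>Q. {w \<in> WW L K. ex w = q})"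
    by (rule card_UN_disjoint[symmetric]) (use finQ finite_WW in auto)
  also have "(\<Union>q\<in>Q. {w \<in> WW L K. ex w = q}) = {w \<in> WW L K. coprime (int (ex w)) \<omega>}"
    using ex_props[OF _ assms] by (auto simp: Q_def g_def)
  finally show ?thesis by (simp add: Q_def g_def)
qed


definition st :: "nat \<Rightarrow> nat \<Rightarrow> nat \<Rightarrow> nat \<Rightarrow> bool \<Rightarrow> nat" where
  "st n a b v x = (v + (if x then b else a)) mod n"

fun pth :: "nat \<Rightarrow> nat \<Rightarrow> nat \<Rightarrow> nat \<Rightarrow> bool list \<Rightarrow> bond list" where
  "pth n a b v [] = []"
| "pth n a b v (x # xs) = (v, st n a b v x) # pth n a b (st n a b v x) xs"

definition endv :: "nat \<Rightarrow> nat \<Rightarrow> nat \<Rightarrow> nat \<Rightarrow> bool list \<Rightarrow> nat" where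
  "endv n a b v w = foldl (st n a b) v w"

lemma endv_Nil[simp]: "endv n a b v [] = v" by (simp add: endv_def)
lemma endv_Cons[simp]: "endv n a b v (x # w) = endv n a b (st n a b v x) w" by (simp add: endv_def)
lemma endv_append: "endv n a b v (u @ u') = endv n a b (endv n a b v u) u'"
  by (simp add: endv_def)

lemma pth_append: "pth n a b v (u @ u') = pth n a b v u @ pth n a b (endv n a b v u) u'"
  by (induction u arbitrary: v) auto

lemma length_pth[simp]: "length (pth n a b v w) = length w"
  by (induction w arbitrary: v) auto

lemma pth_Nil_iff[simp]: "pth n a b v w = [] \<longleftrightarrow> w = []"
  by (cases w) auto

lemma hd_pth: "w \<noteq> [] \<Longrightarrow> fst (hd (pth n a b v w)) = v"
  by (cases w) auto

lemma last_pth: "w \<noteq> [] \<Longrightarrow> snd (last (pth n a b v w)) = endv n a b v w"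
proof (induction w arbitrary: v)
  case Nil then show ?case by simp
next
  case (Cons x w)
  show ?case
  proof (cases "w = []")
    case True then show ?thesis by simp
  next
    case False
    then have "last (pth n a b v (x # w)) = last (pth n a b (st n a b v x) w)" by simp
    then show ?thesis using Cons.IH[OF False] by simp
  qed
qed

lemma ab_ne:
  fixes a b n v :: nat
  assumes "0 < a" "a < b" "b < n"
  shows "(v + a) mod n \<noteq> (v + b) mod n"
proof
  assume e: "(v + a) mod n = (v + b) mod n"
  have "(v + b) mod n = (v + a) mod n" using e by simp
  then have "n dvd (v + b) - (v + a)" using assms by (subst (asm) mod_eq_dvd_iff_nat) auto
  then have "n dvd b - a" by simp
  moreover have "0 < b - a" "b - a < n" using assms by auto
  ultimately show False by (meson nat_dvd_not_less)
qed

lemma map_pth: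
  assumes "0 < a" "a < b" "b < n"
  shows "map (is_b_bond n b) (pth n a b v w) = w"
proof (induction w arbitrary: v)
  case Nil then show ?case by simp
next
  case (Cons x w)
  have "is_b_bond n b (v, st n a b v x) = x"
    using ab_ne[OF assms, of v] by (cases x) (auto simp: is_b_bond_def st_def)
  then show ?case using Cons.IH by simp
qed

lemma st_lt: "0 < n \<Longrightarrow> st n a b v x < n" by (simp add: st_def)

lemma endv_lt: "0 < n \<Longrightarrow> v < n \<Longrightarrow> endv n a b v w < n"
  by (induction w arbitrary: v) (auto simp: st_lt)

lemma pth_bonds: "0 < n \<Longrightarrow> v < n \<Longrightarrow> set (pth n a b v w) \<subseteq> bonds n a b"
proof (induction w arbitrary: v)
  case Nil then show ?case by simp
next
  case (Cons x w)
  have "(v, st n a b v x) \<in> bonds n a b" using Cons.prems by (cases x) (auto simp: bonds_def st_def)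
  then show ?case using Cons.IH[of "st n a b v x"] Cons.prems st_lt by auto
qed

fun chain :: "bond list \<Rightarrow> bool" where
  "chain [] = True"
| "chain [e] = True"
| "chain (e # f # r) = (snd e = fst f \<and> chain (f # r))"

lemma chain_iff: "chain c \<longleftrightarrow> (\<forall>j. Suc j < length c \<longrightarrow> snd (c ! j) = fst (c ! Suc j))"
proof (induction c rule: chain.induct)
  case 1 then show ?case by simp
next
  case (2 e) then show ?case by simp
next
  case (3 e f r)
  show ?case
  proof
    assume c: "chain (e # f # r)"
    show "\<forall>j. Suc j < length (e # f # r) \<longrightarrow> snd ((e # f # r) ! j) = fst ((e # f # r) ! Suc j)"
    proof (intro allI impI)
      fix j assume j: "Suc j < length (e # f # r)"
      show "snd ((e # f # r) ! j) = fst ((e # f # r) ! Suc j)"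
      proof (cases j)
        case 0 then show ?thesis using c by simp
      next
        case (Suc j')
        have "\<forall>j. Suc j < length (f # r) \<longrightarrow> snd ((f # r) ! j) = fst ((f # r) ! Suc j)"
          using c 3 by simp
        then show ?thesis using j Suc by simp
      qed
    qed
  next
    assume h: "\<forall>j. Suc j < length (e # f # r) \<longrightarrow> snd ((e # f # r) ! j) = fst ((e # f # r) ! Suc j)"
    have "snd e = fst f" using h[rule_format, of 0] by simp
    moreover have "\<forall>j. Suc j < length (f # r) \<longrightarrow> snd ((f # r) ! j) = fst ((f # r) ! Suc j)"
    proof (intro allI impI)
      fix j assume "Suc j < length (f # r)"
      then show "snd ((f # r) ! j) = fst ((f # r) ! Suc j)" using h[rule_format, of "Suc j"] by simp
    qed
    ultimately show "chain (e # f # r)" using 3 by simp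
  qed
qed

lemma chain_pth: "chain (pth n a b v w)"
proof (induction w arbitrary: v)
  case Nil then show ?case by simp
next
  case (Cons x w)
  then show ?case by (cases w) auto
qed

lemma is_path_pth: "0 < n \<Longrightarrow> v < n \<Longrightarrow> w \<noteq> [] \<Longrightarrow> is_path n a b (pth n a b v w)"
  unfolding is_path_def using pth_bonds chain_pth[unfolded chain_iff] by auto

lemma is_circuit_pth:
  "0 < n \<Longrightarrow> v < n \<Longrightarrow> w \<noteq> [] \<Longrightarrow> endv n a b v w = v \<Longrightarrow> is_circuit n a b (pth n a b v w)"
  unfolding is_circuit_def using is_path_pth last_pth hd_pth by auto

lemma bond_form:
  assumes "e \<in> bonds n a b"
  shows "e = (fst e, st n a b (fst e) (is_b_bond n b e))" "fst e < n"
  using assms by (auto simp: bonds_def st_def is_b_bond_def)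

lemma path_pth_aux:
  "c \<noteq> [] \<Longrightarrow> set c \<subseteq> bonds n a b \<Longrightarrow> chain c \<Longrightarrow>
   c = pth n a b (fst (hd c)) (map (is_b_bond n b) c)"
proof (induction c)
  case Nil then show ?case by simp
next
  case (Cons e r)
  have eb: "e \<in> bonds n a b" using Cons.prems by simp
  have e: "e = (fst e, st n a b (fst e) (is_b_bond n b e))" by (rule bond_form(1)[OF eb])
  show ?case
  proof (cases r)
    case Nil
    then show ?thesis using e[symmetric] by simp
  next
    case (Cons f r')
    have sf: "snd e = fst f" "chain r" using Cons.prems \<open>r = f # r'\<close> by auto
    have IH: "r = pth n a b (fst (hd r)) (map (is_b_bond n b) r)"
      using Cons.IH Cons.prems sf \<open>r = f # r'\<close> by auto
    have "st n a b (fst e) (is_b_bond n b e) = snd e" by (subst e) simp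
    then have "st n a b (fst e) (is_b_bond n b e) = fst (hd r)"
      using sf \<open>r = f # r'\<close> by simp
    then have "pth n a b (fst (hd (e # r))) (map (is_b_bond n b) (e # r)) =
          (fst e, st n a b (fst e) (is_b_bond n b e)) # pth n a b (fst (hd r)) (map (is_b_bond n b) r)"
      by simp
    also have "\<dots> = e # r" using e[symmetric] IH[symmetric] by simp
    finally show ?thesis by simp
  qed
qed

lemma path_pth: "is_path n a b c \<Longrightarrow> c = pth n a b (fst (hd c)) (map (is_b_bond n b) c)"
  using path_pth_aux chain_iff unfolding is_path_def by blast

lemma path_hd_lt: "is_path n a b c \<Longrightarrow> fst (hd c) < n"
  unfolding is_path_def using bond_form(2) by (metis hd_in_set subsetD)

definition XX :: "nat \<Rightarrow> nat \<Rightarrow> bool list \<Rightarrow> nat" where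
  "XX a b w = (length w - cnt w) * a + cnt w * b"

lemma cnt_le: "cnt w \<le> length w" by (simp add: cnt_def)

lemma cnt_Cons: "cnt (x # w) = (if x then Suc (cnt w) else cnt w)" by (simp add: cnt_def)

lemma XX_Cons: "XX a b (x # w) = (if x then b else a) + XX a b w"
proof (cases x)
  case True
  then have "length (x # w) - cnt (x # w) = length w - cnt w" by (simp add: cnt_Cons)
  then show ?thesis using True by (simp add: XX_def cnt_Cons)
next
  case False
  have "length (x # w) - cnt (x # w) = Suc (length w - cnt w)"
    using False cnt_le[of w] by (simp add: cnt_Cons Suc_diff_le)
  then show ?thesis using False by (simp add: XX_def cnt_Cons)
qed

lemma endv_mod: "endv n a b v w mod n = (v + XX a b w) mod n"
proof (induction w arbitrary: v)
  case Nil then show ?case by (simp add: XX_def cnt_def)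
next
  case (Cons x w)
  have "endv n a b v (x # w) mod n = (st n a b v x + XX a b w) mod n" using Cons.IH by simp
  also have "\<dots> = (v + (if x then b else a) + XX a b w) mod n" by (simp add: st_def mod_add_left_eq)
  also have "v + (if x then b else a) + XX a b w = v + XX a b (x # w)"
    by (simp add: XX_Cons)
  finally show ?case .
qed

lemma endv_eq_iff:
  assumes "0 < n" "v < n"
  shows "endv n a b v w = v \<longleftrightarrow> n dvd XX a b w"
proof (cases "w = []")
  case True then show ?thesis by (simp add: XX_def cnt_def)
next
  case False
  have lt: "endv n a b v w < n" using endv_lt assms by blast
  have "endv n a b v w = v \<longleftrightarrow> endv n a b v w mod n = v mod n" using lt assms by simp
  also have "\<dots> \<longleftrightarrow> (v + XX a b w) mod n = v mod n" by (simp add: endv_mod)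
  also have "\<dots> \<longleftrightarrow> n dvd XX a b w" by (subst mod_eq_dvd_iff_nat) auto
  finally show ?thesis .
qed

lemma cnt_map: "cnt (map P c) = length (filter P c)"
  by (simp add: cnt_def filter_map comp_def)

lemma pth_pw: "endv n a b v u = v \<Longrightarrow> pth n a b v (pw r u) = pw r (pth n a b v u)"
proof (induction r)
  case 0 then show ?case by simp
next
  case (Suc r)
  have "endv n a b v (pw r u) = v" using Suc.prems
    by (induction r) (simp_all add: pw_Suc endv_append)
  then show ?case using Suc by (simp add: pw_Suc pth_append)
qed

lemma XX_pw:
  "XX a b (pw t u) = t * XX a b u"
proof -
  have "length (pw t u) - cnt (pw t u) = t * (length u - cnt u)"
    by (simp add: cnt_pw diff_mult_distrib2)
  then show ?thesis by (simp add: XX_def cnt_pw algebra_simps)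
qed

lemma rotate_inj: "rotate i x = rotate i y \<Longrightarrow> x = y"
proof (induction i)
  case 0 then show ?case by simp
next
  case (Suc i)
  from Suc.prems have "rotate1 (rotate i x) = rotate1 (rotate i y)" by simp
  then have "rotate i x = rotate i y" using inj_rotate1 by (meson injD)
  then show ?case by (rule Suc.IH)
qed

lemma orbit_rot: "orbit (rotate i x) = orbit x"
proof
  show "orbit (rotate i x) \<subseteq> orbit x" by (auto simp: orbit_def rotate_rotate)
  show "orbit x \<subseteq> orbit (rotate i x)"
  proof
    fix z assume "z \<in> orbit x"
    then obtain j where z: "z = rotate j x" by (auto simp: orbit_def)
    show "z \<in> orbit (rotate i x)"
    proof (cases "x = []")
      case True then show ?thesis using z by (auto simp: orbit_def)
    next
      case False
      define L where "L = length x"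
      have L0: "0 < L" using False by (simp add: L_def)
      define m where "m = (L - i mod L) + j"
      have "i = i mod L + L * (i div L)" by simp
      moreover have "i mod L < L" using L0 by simp
      ultimately have "m + i = j + L * (Suc (i div L))" unfolding m_def mult_Suc_right by linarith
      then have mi: "(m + i) mod L = j mod L" by (simp only: mod_mult_self2)
      have "rotate m (rotate i x) = rotate (m + i) x" by (simp add: rotate_rotate)
      also have "\<dots> = rotate ((m + i) mod L) x" unfolding L_def by (rule rotate_conv_mod)
      also have "\<dots> = rotate (j mod L) x" using mi by simp
      also have "\<dots> = rotate j x" unfolding L_def by (rule rotate_conv_mod[symmetric])
      finally have "rotate m (rotate i x) = rotate j x" .
      then have "z = rotate m (rotate i x)" using z by simp
      then show ?thesis unfolding orbit_def by blast
    qed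
  qed
qed


context
  fixes n a b l k :: nat and \<omega> :: int
  assumes n2: "n \<ge> 2" and a0: "0 < a" and ab: "a < b" and bn: "b < n"
    and l1: "l \<ge> 1" and kl: "k \<le> l"
    and eq: "int l * int a + int k * (int b - int a) = \<omega> * int n"
begin

lemma n0: "0 < n" using n2 by simp

lemma XX_main:
  assumes "w \<in> WW l k"
  shows "int (XX a b w) = \<omega> * int n"
proof -
  have lw: "length w = l" "cnt w = k" using assms by (auto simp: WW_def)
  have "int (XX a b w) = (int l - int k) * int a + int k * int b"
    using lw kl by (simp add: XX_def of_nat_diff)
  also have "\<dots> = int l * int a + int k * (int b - int a)" by (simp add: algebra_simps)
  finally show ?thesis using eq by simp
qed

lemma closes:
  assumes "v < n" "w \<in> WW l k"
  shows "endv n a b v w = v"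
proof -
  have "int n dvd int (XX a b w)" using XX_main[OF assms(2)] by simp
  then have "n dvd XX a b w" by simp
  then show ?thesis using endv_eq_iff[OF n0 assms(1)] by simp
qed

lemma bcount_pth: "b_count n b (pth n a b v w) = cnt w"
proof -
  have "b_count n b (pth n a b v w) = cnt (map (is_b_bond n b) (pth n a b v w))"
    by (simp add: b_count_def cnt_map)
  also have "\<dots> = cnt w" using map_pth[OF a0 ab bn] by simp
  finally show ?thesis .
qed

definition SS where "SS = {c. is_circuit n a b c \<and> length c = l \<and> b_count n b c = k}"

lemma S_eq: "SS = (\<lambda>(v, w). pth n a b v w) ` ({..<n} \<times> WW l k)"
proof
  show "SS \<subseteq> (\<lambda>(v, w). pth n a b v w) ` ({..<n} \<times> WW l k)"
  proof
    fix c assume c: "c \<in> SS"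
    then have cp: "is_path n a b c" by (simp add: SS_def is_circuit_def)
    have ce: "c = pth n a b (fst (hd c)) (map (is_b_bond n b) c)" by (rule path_pth[OF cp])
    have v: "fst (hd c) < n" by (rule path_hd_lt[OF cp])
    have "length (map (is_b_bond n b) c) = l" using c by (simp add: SS_def)
    moreover have "cnt (map (is_b_bond n b) c) = k" using c by (simp add: SS_def cnt_map b_count_def)
    ultimately have "map (is_b_bond n b) c \<in> WW l k" by (simp add: WW_def)
    then show "c \<in> (\<lambda>(v, w). pth n a b v w) ` ({..<n} \<times> WW l k)"
      using v ce[symmetric] by (intro image_eqI[where x = "(fst (hd c), map (is_b_bond n b) c)"]) auto
  qed
next
  show "(\<lambda>(v, w). pth n a b v w) ` ({..<n} \<times> WW l k) \<subseteq> SS"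
  proof
    fix c assume "c \<in> (\<lambda>(v, w). pth n a b v w) ` ({..<n} \<times> WW l k)"
    then obtain v w where vw: "v < n" "w \<in> WW l k" "c = pth n a b v w" by auto
    have wne: "w \<noteq> []" using vw l1 by (auto simp: WW_def)
    have "is_circuit n a b c" using is_circuit_pth[OF n0 vw(1) wne closes[OF vw(1,2)]] vw by simp
    moreover have "length c = l" using vw by (simp add: WW_def)
    moreover have "b_count n b c = k" using vw bcount_pth by (simp add: WW_def)
    ultimately show "c \<in> SS" by (simp add: SS_def)
  qed
qed

lemma inS: "v < n \<Longrightarrow> w \<in> WW l k \<Longrightarrow> pth n a b v w \<in> SS"
  unfolding S_eq by (rule image_eqI[where x = "(v, w)"]) auto

lemma fromS:
  assumes "c \<in> SS"
  obtains v w where "v < n" "w \<in> WW l k" "c = pth n a b v w"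
proof -
  from assms obtain x where x: "x \<in> {..<n} \<times> WW l k" "c = (\<lambda>(v, w). pth n a b v w) x"
    unfolding S_eq by (rule imageE)
  obtain v w where "x = (v, w)" by (cases x)
  then show ?thesis using x that by auto
qed

lemma inj_P: "inj_on (\<lambda>(v, w). pth n a b v w) ({..<n} \<times> WW l k)"
proof (rule inj_onI)
  fix x y assume x: "x \<in> {..<n} \<times> WW l k" and y: "y \<in> {..<n} \<times> WW l k"
    and e: "(\<lambda>(v, w). pth n a b v w) x = (\<lambda>(v, w). pth n a b v w) y"
  obtain v w where xv: "x = (v, w)" by (cases x)
  obtain v' w' where yv: "y = (v', w')" by (cases y)
  have e': "pth n a b v w = pth n a b v' w'" using e xv yv by simp
  have "w = map (is_b_bond n b) (pth n a b v w)" by (rule map_pth[OF a0 ab bn, symmetric])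
  also have "\<dots> = map (is_b_bond n b) (pth n a b v' w')" by (simp only: e')
  also have "\<dots> = w'" by (rule map_pth[OF a0 ab bn])
  finally have "w = w'" .
  have wne: "w \<noteq> []" using x xv l1 by (auto simp: WW_def)
  then have w'ne: "w' \<noteq> []" using \<open>w = w'\<close> by simp
  have "v = fst (hd (pth n a b v w))" by (rule hd_pth[OF wne, symmetric])
  also have "\<dots> = fst (hd (pth n a b v' w'))" by (simp only: e')
  also have "\<dots> = v'" by (rule hd_pth[OF w'ne])
  finally have "v = v'" .
  then show "x = y" using xv yv \<open>w = w'\<close> by simp
qed

lemma sym_fwd:
  assumes v: "v < n" and w: "w \<in> WW l k" and c: "c = pth n a b v w"
    and p: "0 < p" "p < l" "rotate p c = c"
  shows "\<exists>t c0. 1 < t \<and> is_circuit n a b c0 \<and> c = pw t c0 \<and> int t dvd \<omega> \<and> t dvd ex w"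
proof -
  have lw: "length w = l" using w by (simp add: WW_def)
  have lc: "length c = l" using c lw by simp
  have cne: "c \<noteq> []" using lc l1 by auto
  define d where "d = per c"
  have d0: "0 < d" and dr: "rotate d c = c" using per_props[OF cne] by (auto simp: d_def)
  have "d \<le> p" unfolding d_def per_def by (rule Least_le) (use p in simp)
  then have dl: "d < l" using p by simp
  have "d dvd l" using per_dvd_len[OF cne] lc by (simp add: d_def)
  then obtain t where t: "l = d * t" by (rule dvdE)
  have t1: "1 < t" using t dl d0 by (cases t; cases "t = 1") auto
  have mapc: "map (is_b_bond n b) c = w" using c map_pth[OF a0 ab bn] by simp
  have wr: "rotate d w = w"
  proof -
    have "map (is_b_bond n b) (rotate d c) = rotate d w" using mapc rotate_map[of d "is_b_bond n b" c] by simp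
    then show ?thesis using dr mapc by simp
  qed
  define w0 where "w0 = take d w"
  have lw0: "length w0 = d" using dl lw by (simp add: w0_def)
  have wne: "w \<noteq> []" using lw l1 by auto
  have w_e0: "w = pw (length w div d) (take d w)"
    by (rule periodic[OF wr d0]) (use lw t wne in simp_all)
  have ldt: "length w div d = t" using lw t d0 by simp
  have w_e: "w = pw t w0" using w_e0 ldt unfolding w0_def by metis
  define c0 where "c0 = pth n a b v w0"
  have split: "c = c0 @ pth n a b (endv n a b v w0) (drop d w)"
  proof -
    have "w = w0 @ drop d w" by (simp add: w0_def)
    then have "c = pth n a b v (w0 @ drop d w)" using c by simp
    then show ?thesis by (simp add: pth_append c0_def)
  qed
  have c_e0: "c = pw (length c div d) (take d c)"
    by (rule periodic[OF dr d0]) (use lc t cne in simp_all)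
  have "take d c = c0" using split lw0 by (simp add: c0_def)
  moreover have "length c div d = t" using lc t d0 by simp
  ultimately have c_e: "c = pw t c0" using c_e0 by metis
  obtain t' where t': "t = Suc t'" using t1 by (cases t) auto
  have t'0: "0 < t'" using t1 t' by simp
  have "c0 @ pth n a b (endv n a b v w0) (drop d w) = c0 @ pw t' c0"
    using split c_e t' by (metis pw_Suc)
  then have rest: "pth n a b (endv n a b v w0) (drop d w) = pw t' c0" by simp
  have dne: "drop d w \<noteq> []" using dl lw by simp
  have c0ne: "c0 \<noteq> []" using lw0 d0 by (auto simp: c0_def)
  obtain t'' where t'': "t' = Suc t''" using t'0 by (cases t') auto
  have "hd (pw t' c0) = hd c0" using c0ne t'' by (simp add: pw_Suc)
  have w0ne: "w0 \<noteq> []" using lw0 d0 by auto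
  have h1: "fst (hd (pth n a b (endv n a b v w0) (drop d w))) = endv n a b v w0" by (rule hd_pth[OF dne])
  have h2: "fst (hd c0) = v" unfolding c0_def by (rule hd_pth[OF w0ne])
  have "endv n a b v w0 = fst (hd (pw t' c0))" using h1 rest by simp
  also have "\<dots> = fst (hd c0)" using \<open>hd (pw t' c0) = hd c0\<close> by simp
  finally have "endv n a b v w0 = v" using h2 by simp
  then have circ: "is_circuit n a b c0"
    unfolding c0_def using c0ne by (intro is_circuit_pth[OF n0 v]) (auto simp: c0_def)
  have "n dvd XX a b w0" using \<open>endv n a b v w0 = v\<close> endv_eq_iff[OF n0 v] by simp
  then obtain y where y: "XX a b w0 = n * y" by (rule dvdE)
  have "XX a b w = t * XX a b w0" using w_e XX_pw by metis
  then have A: "int (XX a b w) = int t * (int n * int y)" using y by simp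
  have "\<omega> * int n = int t * (int n * int y)" using A XX_main[OF w] by metis
  then have h: "\<omega> * int n = (int t * int y) * int n" by (simp add: ac_simps)
  have "int n \<noteq> 0" using n0 by simp
  then have "\<omega> = int t * int y" using h mult_right_cancel[of "int n" \<omega> "int t * int y"] by simp
  then have td: "int t dvd \<omega>" by simp
  have "t dvd l" using t by simp
  then have "rotate (length w div t) w = w \<longleftrightarrow> t dvd ex w" using ex_dvd_iff[OF wne] lw by simp
  moreover have "length w div t = d" using lw t t1 by simp
  ultimately have "t dvd ex w" using wr by simp
  then show ?thesis using t1 circ c_e td by blast
qed

lemma sym_bwd:
  assumes v: "v < n" and w: "w \<in> WW l k" and t: "1 < t" "t dvd ex w" "int t dvd \<omega>"
  shows "\<exists>p. 0 < p \<and> p < l \<and> rotate p (pth n a b v w) = pth n a b v w"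
proof -
  have lw: "length w = l" using w by (simp add: WW_def)
  have wne: "w \<noteq> []" using lw l1 by auto
  have l0: "0 < l" using l1 by simp
  have "ex w dvd l" using ex_props(2)[OF w l0] .
  then have tl: "t dvd l" using t(2) by (rule dvd_trans[rotated])
  then obtain d where d: "l = t * d" by (rule dvdE)
  have d0: "0 < d" using d l0 by (cases d) auto
  have "d * 1 < d * t" using t(1) d0 by (intro mult_strict_left_mono) auto
  then have dl: "d < l" using d by (simp add: mult.commute)
  have ld: "length w div t = d" using lw d t(1) by simp
  have wr: "rotate d w = w" using ex_dvd_iff[OF wne, of t] tl lw ld t(2) by simp
  define w0 where "w0 = take d w"
  have w_e0: "w = pw (length w div d) (take d w)"
    by (rule periodic[OF wr d0]) (use lw d wne in simp_all)
  have "length w div d = t" using lw d d0 by simp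
  then have w_e: "w = pw t w0" using w_e0 unfolding w0_def by metis
  have lw0: "length w0 = d" using dl lw by (simp add: w0_def)
  obtain y where y: "\<omega> = int t * y" using t(3) by (rule dvdE)
  have "XX a b w = t * XX a b w0" using w_e XX_pw by metis
  then have "int t * int (XX a b w0) = int t * (y * int n)" using XX_main[OF w] y by simp
  then have "int (XX a b w0) = y * int n" using t(1) by simp
  then have "int n dvd int (XX a b w0)" by simp
  then have "n dvd XX a b w0" by simp
  then have ev: "endv n a b v w0 = v" using endv_eq_iff[OF n0 v] by simp
  have "pth n a b v w = pw t (pth n a b v w0)" using w_e pth_pw[OF ev] by metis
  moreover have "rotate (length (pth n a b v w0)) (pw t (pth n a b v w0)) = pw t (pth n a b v w0)"
    by (rule rot_pw)
  ultimately have "rotate d (pth n a b v w) = pth n a b v w" using lw0 by simp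
  then show ?thesis using d0 dl by blast
qed

lemma K1:
  assumes v: "v < n" and w: "w \<in> WW l k"
  shows "(\<exists>p. 0 < p \<and> p < l \<and> rotate p (pth n a b v w) = pth n a b v w) \<longleftrightarrow>
         \<not> coprime (int (ex w)) \<omega>"
proof
  assume "\<exists>p. 0 < p \<and> p < l \<and> rotate p (pth n a b v w) = pth n a b v w"
  then obtain p where "0 < p" "p < l" "rotate p (pth n a b v w) = pth n a b v w" by blast
  then obtain t c0 where tc: "1 < t" "int t dvd \<omega>" "t dvd ex w"
    using sym_fwd[OF v w refl] by blast
  show "\<not> coprime (int (ex w)) \<omega>"
  proof
    assume cp: "coprime (int (ex w)) \<omega>"
    have "int t dvd int (ex w)" using tc by simp
    then have "is_unit (int t)" using coprime_common_divisor[OF cp _ tc(2)] by blast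
    then show False using tc(1) by simp
  qed
next
  assume ncp: "\<not> coprime (int (ex w)) \<omega>"
  define g where "g = gcd (int (ex w)) \<omega>"
  have l0: "0 < l" using l1 by simp
  have e0: "0 < ex w" using ex_props(1)[OF w l0] .
  have g0: "0 \<le> g" by (simp add: g_def)
  have gn0: "g \<noteq> 0" using e0 by (simp add: g_def)
  have gn1: "g \<noteq> 1" using ncp by (simp add: g_def coprime_iff_gcd_eq_1)
  define t where "t = nat g"
  have tg: "int t = g" using g0 by (simp add: t_def)
  have t1: "1 < t" using g0 gn0 gn1 tg by linarith
  have "g dvd int (ex w)" by (simp add: g_def)
  then have "t dvd ex w" using tg by (metis int_dvd_int_iff)
  moreover have "int t dvd \<omega>" using tg by (simp add: g_def)
  ultimately show "\<exists>p. 0 < p \<and> p < l \<and> rotate p (pth n a b v w) = pth n a b v w"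
    using sym_bwd[OF v w t1] by blast
qed

lemma K3:
  assumes "c = rotate i (pw r c0)" "1 < r" "c0 \<noteq> []"
  shows "\<exists>p. 0 < p \<and> p < length c \<and> rotate p c = c"
proof -
  have "rotate (length c0) c = rotate i (rotate (length c0) (pw r c0))"
    using assms(1) by (simp add: rotate_rotate add.commute)
  also have "\<dots> = c" using assms(1) rot_pw[of c0 r] by simp
  finally have "rotate (length c0) c = c" .
  moreover have "length c0 < length c"
  proof -
    have "length c = r * length c0" using assms(1) by simp
    moreover have "1 * length c0 < r * length c0" using assms(2,3) by (intro mult_strict_right_mono) auto
    ultimately show ?thesis by simp
  qed
  moreover have "0 < length c0" using assms by simp
  ultimately show ?thesis by blast
qed

definition PC where "PC = {c \<in> SS. \<not> (\<exists>p. 0 < p \<and> p < l \<and> rotate p c = c)}"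

lemma PC_eq: "PC = (\<lambda>(v, w). pth n a b v w) ` ({..<n} \<times> {w \<in> WW l k. coprime (int (ex w)) \<omega>})"
proof
  show "PC \<subseteq> (\<lambda>(v, w). pth n a b v w) ` ({..<n} \<times> {w \<in> WW l k. coprime (int (ex w)) \<omega>})"
  proof
    fix c assume c: "c \<in> PC"
    then have "c \<in> SS" by (simp add: PC_def)
    then obtain v w where vw: "v < n" "w \<in> WW l k" "c = pth n a b v w" using fromS by blast
    have nrot: "\<not> (\<exists>p. 0 < p \<and> p < l \<and> rotate p c = c)" using c by (simp add: PC_def)
    then have "\<not> (\<exists>p. 0 < p \<and> p < l \<and> rotate p (pth n a b v w) = pth n a b v w)"
      using vw(3) by simp
    then have "coprime (int (ex w)) \<omega>" using K1[OF vw(1,2)] by blast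
    then show "c \<in> (\<lambda>(v, w). pth n a b v w) ` ({..<n} \<times> {w \<in> WW l k. coprime (int (ex w)) \<omega>})"
      by (intro image_eqI[where x = "(v, w)"]) (use vw in auto)
  qed
next
  show "(\<lambda>(v, w). pth n a b v w) ` ({..<n} \<times> {w \<in> WW l k. coprime (int (ex w)) \<omega>}) \<subseteq> PC"
  proof
    fix c assume "c \<in> (\<lambda>(v, w). pth n a b v w) ` ({..<n} \<times> {w \<in> WW l k. coprime (int (ex w)) \<omega>})"
    then obtain v w where vw: "v < n" "w \<in> WW l k" "coprime (int (ex w)) \<omega>" "c = pth n a b v w"
      by auto
    have "c \<in> SS" using inS[OF vw(1,2)] vw(4) by simp
    moreover have "\<not> (\<exists>p. 0 < p \<and> p < l \<and> rotate p c = c)" using K1[OF vw(1,2)] vw by simp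
    ultimately show "c \<in> PC" by (simp add: PC_def)
  qed
qed

lemma card_PC: "card PC = n * card {w \<in> WW l k. coprime (int (ex w)) \<omega>}"
proof -
  have inj: "inj_on (\<lambda>(v, w). pth n a b v w) ({..<n} \<times> {w \<in> WW l k. coprime (int (ex w)) \<omega>})"
    by (rule inj_on_subset[OF inj_P]) auto
  show ?thesis unfolding PC_eq card_image[OF inj] by (simp add: card_cartesian_product)
qed

lemma finite_PC: "finite PC"
proof -
  have "finite ({..<n} \<times> {w \<in> WW l k. coprime (int (ex w)) \<omega>})" using finite_WW by auto
  then show ?thesis unfolding PC_eq by simp
qed

lemma rot_SS:
  assumes "c \<in> SS"
  shows "rotate i c \<in> SS"
proof -
  obtain v w where vw: "v < n" "w \<in> WW l k" "c = pth n a b v w" using fromS[OF assms] by blast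
  have lw: "length w = l" using vw by (simp add: WW_def)
  define j where "j = i mod l"
  have jl: "j < l" using l1 by (simp add: j_def)
  define v' where "v' = endv n a b v (take j w)"
  have split: "c = pth n a b v (take j w) @ pth n a b v' (drop j w)"
    using vw(3) pth_append[of n a b v "take j w" "drop j w"] by (simp add: v'_def)
  have jw: "j \<le> length w" using jl lw by simp
  then have ltj: "length (pth n a b v (take j w)) = j" by simp
  have tk: "take j c = pth n a b v (take j w)"
    by (subst split) (simp only: take_append ltj diff_self_eq_0 take_0 append_Nil2 take_all order_refl)
  have dr: "drop j c = pth n a b v' (drop j w)"
    by (subst split) (simp only: drop_append ltj diff_self_eq_0 drop_0 drop_all order_refl append_Nil)
  have ev: "endv n a b v' (drop j w) = v"
    using closes[OF vw(1,2)] endv_append[of n a b v "take j w" "drop j w"] by (simp add: v'_def)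
  have "rotate i c = drop j c @ take j c" using lw vw(3) by (simp add: rotate_drop_take j_def)
  also have "\<dots> = pth n a b v' (drop j w) @ pth n a b v (take j w)" using tk dr by simp
  also have "\<dots> = pth n a b v' (drop j w @ take j w)" using ev by (simp add: pth_append)
  finally have r: "rotate i c = pth n a b v' (drop j w @ take j w)" .
  have v'n: "v' < n" unfolding v'_def by (rule endv_lt[OF n0 vw(1)])
  have e2: "cnt (drop j w @ take j w) = cnt (take j w @ drop j w)"
    unfolding cnt_def filter_append length_append by (rule add.commute)
  have e1: "cnt (take j w @ drop j w) = cnt w" by (simp only: append_take_drop_id)
  have "cnt w = k" using vw(2) by (simp add: WW_def)
  then have "cnt (drop j w @ take j w) = k" using e1 e2 by simp
  moreover have "length (drop j w @ take j w) = l" using lw jl by simp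
  ultimately have "drop j w @ take j w \<in> WW l k" by (simp add: WW_def)
  then show ?thesis using r inS[OF v'n] by simp
qed

lemma rot_PC:
  assumes "c \<in> PC"
  shows "rotate i c \<in> PC"
proof -
  have "rotate i c \<in> SS" using assms rot_SS by (simp add: PC_def)
  moreover have "\<not> (\<exists>p. 0 < p \<and> p < l \<and> rotate p (rotate i c) = rotate i c)"
  proof
    assume "\<exists>p. 0 < p \<and> p < l \<and> rotate p (rotate i c) = rotate i c"
    then obtain p where p: "0 < p" "p < l" "rotate p (rotate i c) = rotate i c" by blast
    then have "rotate i (rotate p c) = rotate i c" by (simp add: rotate_rotate add.commute)
    then have "rotate p c = c" by (rule rotate_inj)
    then show False using assms p by (auto simp: PC_def)
  qed
  ultimately show ?thesis by (simp add: PC_def)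
qed

lemma card_orbit:
  assumes c: "c \<in> PC"
  shows "card (orbit c) = l"
proof -
  have lc: "length c = l" using c by (simp add: PC_def SS_def)
  have oc: "orbit c = (\<lambda>i. rotate i c) ` {..<l}"
  proof
    show "orbit c \<subseteq> (\<lambda>i. rotate i c) ` {..<l}"
    proof
      fix z assume "z \<in> orbit c"
      then obtain i where z: "z = rotate i c" by (auto simp: orbit_def)
      have "z = rotate (i mod length c) c" using z rotate_conv_mod[of i c] by simp
      then have "z = rotate (i mod l) c" using lc by simp
      moreover have "i mod l < l" using l1 by simp
      ultimately show "z \<in> (\<lambda>i. rotate i c) ` {..<l}" by auto
    qed
    show "(\<lambda>i. rotate i c) ` {..<l} \<subseteq> orbit c" by (auto simp: orbit_def)
  qed
  have key: "\<And>i j. i < j \<Longrightarrow> j < l \<Longrightarrow> rotate i c \<noteq> rotate j c"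
  proof
    fix i j assume ij: "i < j" "j < l" "rotate i c = rotate j c"
    have "rotate i (rotate (j - i) c) = rotate j c" using ij by (simp add: rotate_rotate)
    then have "rotate i (rotate (j - i) c) = rotate i c" using ij by simp
    then have rj: "rotate (j - i) c = c" by (rule rotate_inj)
    have "0 < j - i" "j - i < l" using ij by auto
    then show False using c rj unfolding PC_def by blast
  qed
  have inj: "inj_on (\<lambda>i. rotate i c) {..<l}"
  proof (rule inj_onI)
    fix i j assume "i \<in> {..<l}" "j \<in> {..<l}" "rotate i c = rotate j c"
    then have ij: "i < l" "j < l" "rotate i c = rotate j c" by auto
    show "i = j"
    proof (rule ccontr)
      assume "i \<noteq> j"
      then consider "i < j" | "j < i" by linarith
      then show False
      proof cases
        case 1 then show False using key[of i j] ij by simp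
      next
        case 2 then show False using key[of j i] ij by simp
      qed
    qed
  qed
  show ?thesis unfolding oc card_image[OF inj] by simp
qed

lemma prim_eq: "prim_orbits n a b l k = orbit ` PC"
proof
  show "prim_orbits n a b l k \<subseteq> orbit ` PC"
  proof
    fix Orb assume "Orb \<in> prim_orbits n a b l k"
    then obtain c where c: "is_circuit n a b c" "length c = l" "b_count n b c = k"
      "Orb = orbit c" "primitive_orbit n a b Orb" by (auto simp: prim_orbits_def)
    have cS: "c \<in> SS" using c by (simp add: SS_def)
    have "c \<in> PC"
    proof (rule ccontr)
      assume "c \<notin> PC"
      then obtain p where p: "0 < p" "p < l" "rotate p c = c" using cS by (auto simp: PC_def)
      obtain v w where vw: "v < n" "w \<in> WW l k" "c = pth n a b v w" using fromS[OF cS] by blast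
      obtain t c0 where tc: "1 < t" "is_circuit n a b c0" "c = pw t c0"
        using sym_fwd[OF vw p] by blast
      have "Orb = orbit (concat (replicate t c0))" using c(4) tc(3) by (simp add: pw_def)
      then show False using c(5) tc unfolding primitive_orbit_def by blast
    qed
    then show "Orb \<in> orbit ` PC" using c(4) by blast
  qed
next
  show "orbit ` PC \<subseteq> prim_orbits n a b l k"
  proof
    fix Orb assume "Orb \<in> orbit ` PC"
    then obtain c where c: "c \<in> PC" "Orb = orbit c" by blast
    have cS: "c \<in> SS" using c by (simp add: PC_def)
    have "primitive_orbit n a b Orb"
      unfolding primitive_orbit_def
    proof
      assume "\<exists>c0 r. 1 < r \<and> is_circuit n a b c0 \<and> Orb = orbit (concat (replicate r c0))"
      then obtain c0 r where cr: "1 < r" "is_circuit n a b c0" "Orb = orbit (pw r c0)"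
        by (auto simp: pw_def)
      have "c \<in> orbit c" unfolding orbit_def by (auto intro: exI[of _ 0])
      then have "c \<in> orbit (pw r c0)" using c(2) cr(3) by simp
      then obtain i where ci: "c = rotate i (pw r c0)" by (auto simp: orbit_def)
      have "c0 \<noteq> []" using cr(2) by (simp add: is_circuit_def is_path_def)
      then obtain p where "0 < p" "p < length c" "rotate p c = c" using K3[OF ci cr(1)] by blast
      moreover have "length c = l" using cS by (simp add: SS_def)
      ultimately show False using c(1) by (auto simp: PC_def)
    qed
    then show "Orb \<in> prim_orbits n a b l k"
      using cS c(2) unfolding prim_orbits_def SS_def by blast
  qed
qed

lemma card_prim: "l * card (prim_orbits n a b l k) = card PC"
proof -
  have U: "\<Union> (orbit ` PC) = PC"
  proof
    show "\<Union> (orbit ` PC) \<subseteq> PC" using rot_PC by (auto simp: orbit_def)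
    show "PC \<subseteq> \<Union> (orbit ` PC)"
    proof
      fix c assume "c \<in> PC"
      moreover have "c \<in> orbit c" unfolding orbit_def by (auto intro: exI[of _ 0])
      ultimately show "c \<in> \<Union> (orbit ` PC)" by blast
    qed
  qed
  have "l * card (orbit ` PC) = card (\<Union> (orbit ` PC))"
  proof (rule card_partition)
    show "finite (orbit ` PC)" using finite_PC by simp
    show "finite (\<Union> (orbit ` PC))" using U finite_PC by simp
    show "\<And>c. c \<in> orbit ` PC \<Longrightarrow> card c = l" using card_orbit by auto
    show "\<And>c1 c2. c1 \<in> orbit ` PC \<Longrightarrow> c2 \<in> orbit ` PC \<Longrightarrow> c1 \<noteq> c2 \<Longrightarrow> c1 \<inter> c2 = {}"
    proof -
      fix c1 c2 assume "c1 \<in> orbit ` PC" "c2 \<in> orbit ` PC" "c1 \<noteq> c2"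
      then obtain x y where xy: "c1 = orbit x" "c2 = orbit y" by blast
      show "c1 \<inter> c2 = {}"
      proof (rule ccontr)
        assume "c1 \<inter> c2 \<noteq> {}"
        then obtain z where "z \<in> orbit x" "z \<in> orbit y" using xy by blast
        from \<open>z \<in> orbit x\<close> obtain i where zi: "z = rotate i x" unfolding orbit_def by blast
        from \<open>z \<in> orbit y\<close> obtain j where zj: "z = rotate j y" unfolding orbit_def by blast
        have "orbit x = orbit z" using zi orbit_rot[of i x] by simp
        also have "\<dots> = orbit y" using zj orbit_rot[of j y] by simp
        finally have "orbit x = orbit y" .
        then show False using xy \<open>c1 \<noteq> c2\<close> by simp
      qed
    qed
  qed
  then show ?thesis using U prim_eq by simp
qed

end


lemma main_ctx:
  fixes n a b l k :: nat and \<omega> :: int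
  assumes n2: "n \<ge> 2" and a0: "0 < a" and ab: "a < b" and bn: "b < n"
    and l1: "l \<ge> 1" and kl: "k \<le> l"
    and eq: "int l * int a + int k * (int b - int a) = \<omega> * int n"
  shows "real (card (prim_orbits n a b l k)) =
    real n / real l *
      (\<Sum>q\<in>{q. 0 < q \<and> q dvd gcd l k \<and> coprime (int q) \<omega>}.
         \<Sum>m\<in>{m. m dvd (gcd l k div q)}.
           real_of_int (moebius_mu m) * real ((l div (q * m)) choose (k div (q * m))))"
proof -
  have l0: "0 < l" using l1 by simp
  have c1: "l * card (prim_orbits n a b l k) = n * card {w \<in> WW l k. coprime (int (ex w)) \<omega>}"
    using card_prim[OF assms] card_PC[OF assms] by simp
  have ws: "(\<Sum>q\<in>{q. 0 < q \<and> q dvd gcd l k \<and> coprime (int q) \<omega>}.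
         \<Sum>m\<in>{m. m dvd (gcd l k div q)}.
           real_of_int (moebius_mu m) * real ((l div (q * m)) choose (k div (q * m))))
       = real (card {w \<in> WW l k. coprime (int (ex w)) \<omega>})"
    by (rule word_count[OF l0])
  have "real l * real (card (prim_orbits n a b l k)) = real n * real (card {w \<in> WW l k. coprime (int (ex w)) \<omega>})"
    using c1 by (metis of_nat_mult)
  then have "real (card (prim_orbits n a b l k)) = real n / real l * real (card {w \<in> WW l k. coprime (int (ex w)) \<omega>})"
    using l0 by (simp add: field_simps)
  then show ?thesis using ws by simp
qed

theorem mainTheorem16:
  fixes n a b l k :: nat and \<omega> :: int
  assumes "n \<ge> 2" and "0 < a" and "a < b" and "b < n"
    and "gcd n (gcd a b) = 1"
    and "l \<ge> 1" and "k \<le> l"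
    and "int l * int a + int k * (int b - int a) = \<omega> * int n"
  shows "real (card (prim_orbits n a b l k)) =
    real n / real l *
      (\<Sum>q\<in>{q. 0 < q \<and> q dvd gcd l k \<and> coprime (int q) \<omega>}.
         \<Sum>m\<in>{m. m dvd (gcd l k div q)}.
           real_of_int (moebius_mu m) * real ((l div (q * m)) choose (k div (q * m))))"
  by (rule main_ctx[OF assms(1-4) assms(6-8)])

end
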